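(* Let $k$ be a positive integer and $Y$ a finite set. The algebra $\mathbf A=Y^{[k]}$ is strongly abelian (i.e., the full relation $A\times A$ is a strongly abelian congruence) and $c_{\mathbf A}(n)\le |Y|^{n^{1/k}}$ for every $n$.
   Context: Fix the signature consisting of a unary symbol $s$ and a $k$-ary symbol $d$. For a set $Y$, $Y^{[k]}$ is the algebra with universe $Y^k$ and operations $s((y_1,y_2,\dots,y_k))=(y_2,\dots,y_k,y_1)$ and $d((y^1_1,\dots,y^1_k),\dots,(y^k_1,\dots,y^k_k))=(y^1_1,y^2_2,\dots,y^k_k)$. For a finite algebra $\mathbf A$, $c_{\mathbf A}(n)$ is the maximum of $|\mathrm{Hom}(\mathbf X,\mathbf A)|$ over algebras $\mathbf X$ in the signature of $\mathbf A$ with at most $n$ elements. A congruence $\alpha$ of $\mathbf A$ is strongly abelian if for every $m\ge1$, every $m$-ary term operation $t$ of $\mathbf A$ and all $x_1,\dots,x_m,y_1,\dots,y_m,z_2,\dots,z_m\in A$ with $(x_i,y_i)\in\alpha$ for all $i$ and $(y_i,z_i)\in\alpha$ for $i\ge2$, $t(x_1,\dots,x_m)=t(y_1,\dots,y_m)$ implies $t(x_1,z_2,\dots,z_m)=t(y_1,z_2,\dots,z_m)$. *)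

theory Defs
  imports Main "HOL-Library.FuncSet" Complex_Main
begin

text \<open>Algebras in the signature consisting of a unary symbol s and a k-ary symbol d.
  The k-ary operation takes its arguments as a function nat => 'a, of which only
  the positions 0..<k matter.\<close>

record 'a alg =
  carrier :: "'a set"
  s_op :: "'a \<Rightarrow> 'a"
  d_op :: "(nat \<Rightarrow> 'a) \<Rightarrow> 'a"

definition algebra :: "nat \<Rightarrow> 'a alg \<Rightarrow> bool" where
  "algebra k X \<longleftrightarrow>
     (\<forall>x\<in>carrier X. s_op X x \<in> carrier X) \<and>
     (\<forall>a. (\<forall>i<k. a i \<in> carrier X) \<longrightarrow> d_op X a \<in> carrier X) \<and>
     (\<forall>a b. (\<forall>i<k. a i = b i) \<longrightarrow> d_op X a = d_op X b)"

definition power_alg :: "nat \<Rightarrow> 'y set \<Rightarrow> (nat \<Rightarrow> 'y) alg" where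
  "power_alg k Y = \<lparr> carrier = ({..<k} \<rightarrow>\<^sub>E Y),
     s_op = (\<lambda>y. \<lambda>i. if i < k then y ((i + 1) mod k) else undefined),
     d_op = (\<lambda>a. \<lambda>i. if i < k then a i i else undefined) \<rparr>"

definition hom :: "nat \<Rightarrow> 'a alg \<Rightarrow> 'b alg \<Rightarrow> ('a \<Rightarrow> 'b) set" where
  "hom k X A = {h. h \<in> carrier X \<rightarrow>\<^sub>E carrier A \<and>
     (\<forall>x\<in>carrier X. h (s_op X x) = s_op A (h x)) \<and>
     (\<forall>a. (\<forall>i<k. a i \<in> carrier X) \<longrightarrow> h (d_op X a) = d_op A (h \<circ> a))}"

text \<open>c_A(n): maximum of |Hom(X,A)| over (nonempty) algebras X with at most n elements.
  Up to isomorphism every such X has a carrier consisting of natural numbers.\<close>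

definition c_fun :: "nat \<Rightarrow> 'b alg \<Rightarrow> nat \<Rightarrow> nat" where
  "c_fun k A n = Sup {card (hom k X A) | X :: nat alg.
      algebra k X \<and> carrier X \<noteq> {} \<and> finite (carrier X) \<and> card (carrier X) \<le> n}"

datatype trm = Var nat | S trm | D "trm list"

fun wf_trm :: "nat \<Rightarrow> nat \<Rightarrow> trm \<Rightarrow> bool" where
  "wf_trm k m (Var i) = (i < m)"
| "wf_trm k m (S t) = wf_trm k m t"
| "wf_trm k m (D ts) = (length ts = k \<and> (\<forall>t\<in>set ts. wf_trm k m t))"

fun eval :: "'a alg \<Rightarrow> (nat \<Rightarrow> 'a) \<Rightarrow> trm \<Rightarrow> 'a" where
  "eval A e (Var i) = e i"
| "eval A e (S t) = s_op A (eval A e t)"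
| "eval A e (D ts) = (let vs = map (eval A e) ts in d_op A (\<lambda>i. vs ! i))"

definition congruence :: "nat \<Rightarrow> 'a alg \<Rightarrow> ('a \<times> 'a) set \<Rightarrow> bool" where
  "congruence k A \<alpha> \<longleftrightarrow> equiv (carrier A) \<alpha> \<and>
     (\<forall>x y. (x, y) \<in> \<alpha> \<longrightarrow> (s_op A x, s_op A y) \<in> \<alpha>) \<and>
     (\<forall>a b. (\<forall>i<k. (a i, b i) \<in> \<alpha>) \<longrightarrow> (d_op A a, d_op A b) \<in> \<alpha>)"

definition strongly_abelian :: "nat \<Rightarrow> 'a alg \<Rightarrow> ('a \<times> 'a) set \<Rightarrow> bool" where
  "strongly_abelian k A \<alpha> \<longleftrightarrow> congruence k A \<alpha> \<and>
     (\<forall>m t x y z. m \<ge> 1 \<longrightarrow> wf_trm k m t \<longrightarrow>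
        (\<forall>i<m. x i \<in> carrier A \<and> y i \<in> carrier A \<and> z i \<in> carrier A) \<longrightarrow>
        (\<forall>i<m. (x i, y i) \<in> \<alpha>) \<longrightarrow>
        (\<forall>i. 1 \<le> i \<and> i < m \<longrightarrow> (y i, z i) \<in> \<alpha>) \<longrightarrow>
        eval A x t = eval A y t \<longrightarrow>
        eval A (\<lambda>i. if i = 0 then x 0 else z i) t = eval A (\<lambda>i. if i = 0 then y 0 else z i) t)"

end

theory Submission
  imports Defs
begin
lemma pa_carrier_ext: "y \<in> carrier (power_alg k Y) \<Longrightarrow> i \<ge> k \<Longrightarrow> y i = undefined"
  by (auto simp: power_alg_def PiE_def extensional_def)

lemma s_op_pa: "s_op (power_alg k Y) = (\<lambda>y. \<lambda>i. if i < k then y ((i + 1) mod k) else undefined)"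
  by (simp add: power_alg_def)

lemma d_op_pa: "d_op (power_alg k Y) = (\<lambda>a. \<lambda>i. if i < k then a i i else undefined)"
  by (simp add: power_alg_def)

lemma term_shape:
  assumes "wf_trm k m t"
  shows "\<exists>L J. (\<forall>i<k. L i < m \<and> J i < k) \<and>
     (\<forall>e. (\<forall>i<m. e i \<in> carrier (power_alg k Y)) \<longrightarrow>
        eval (power_alg k Y) e t = (\<lambda>i. if i < k then e (L i) (J i) else undefined))"
  using assms
proof (induction t)
  case (Var l)
  have "eval (power_alg k Y) e (Var l) = (\<lambda>i. if i < k then e l i else undefined)"
    if e: "\<forall>i<m. e i \<in> carrier (power_alg k Y)" for e
  proof
    fix i
    have "l < m" using Var by simp
    then have "e l \<in> carrier (power_alg k Y)" using e by blast
    then show "eval (power_alg k Y) e (Var l) i = (if i < k then e l i else undefined)"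
      using pa_carrier_ext[of "e l" k Y i] by simp
  qed
  moreover have "l < m" using Var by simp
  ultimately show ?case by (intro exI[of _ "\<lambda>_. l"] exI[of _ "\<lambda>i. i"]) simp
next
  case (S t)
  have wt: "wf_trm k m t" using S.prems by simp
  from S.IH[OF wt] obtain L J where LJ: "\<forall>i<k. L i < m \<and> J i < k"
    "\<forall>e. (\<forall>i<m. e i \<in> carrier (power_alg k Y)) \<longrightarrow>
        eval (power_alg k Y) e t = (\<lambda>i. if i < k then e (L i) (J i) else undefined)" by blast
  have b: "L ((i+1) mod k) < m \<and> J ((i+1) mod k) < k" if "i < k" for i
  proof -
    have "(i+1) mod k < k" using that by simp
    then show ?thesis using LJ(1) by blast
  qed
  have "eval (power_alg k Y) e (S t) = (\<lambda>i. if i < k then e (L ((i+1) mod k)) (J ((i+1) mod k)) else undefined)"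
    if e: "\<forall>i<m. e i \<in> carrier (power_alg k Y)" for e
  proof
    fix i
    have ev: "eval (power_alg k Y) e t = (\<lambda>i. if i < k then e (L i) (J i) else undefined)"
      using mp[OF spec[OF LJ(2), of e] e] .
    show "eval (power_alg k Y) e (S t) i = (if i < k then e (L ((i+1) mod k)) (J ((i+1) mod k)) else undefined)"
    proof (cases "i < k")
      case True
      then have "(i+1) mod k < k" by simp
      then show ?thesis using True by (simp add: s_op_pa ev)
    qed (simp add: s_op_pa)
  qed
  then have "\<forall>e. (\<forall>i<m. e i \<in> carrier (power_alg k Y)) \<longrightarrow> eval (power_alg k Y) e (S t) = (\<lambda>i. if i < k then e (L ((i+1) mod k)) (J ((i+1) mod k)) else undefined)"
    by simp
  moreover have "\<forall>i<k. L ((i+1) mod k) < m \<and> J ((i+1) mod k) < k" using b by simp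
  ultimately show ?case by (intro exI[of _ "\<lambda>i. L ((i+1) mod k)"] exI[of _ "\<lambda>i. J ((i+1) mod k)"] conjI)
next
  case (D ts)
  have ex: "\<forall>t\<in>set ts. \<exists>LJ. (\<forall>i<k. fst LJ i < m \<and> snd LJ i < k) \<and>
     (\<forall>e. (\<forall>i<m. e i \<in> carrier (power_alg k Y)) \<longrightarrow>
        eval (power_alg k Y) e t = (\<lambda>i. if i < k then e (fst LJ i) (snd LJ i) else undefined))"
  proof
    fix t assume t: "t \<in> set ts"
    have "wf_trm k m t" using D.prems t by simp
    then obtain L J where "\<forall>i<k. L i < m \<and> J i < k"
     "\<forall>e. (\<forall>i<m. e i \<in> carrier (power_alg k Y)) \<longrightarrow>
        eval (power_alg k Y) e t = (\<lambda>i. if i < k then e (L i) (J i) else undefined)"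
      using D.IH[OF t \<open>wf_trm k m t\<close>] by blast
    then show "\<exists>LJ. (\<forall>i<k. fst LJ i < m \<and> snd LJ i < k) \<and>
     (\<forall>e. (\<forall>i<m. e i \<in> carrier (power_alg k Y)) \<longrightarrow>
        eval (power_alg k Y) e t = (\<lambda>i. if i < k then e (fst LJ i) (snd LJ i) else undefined))" by (intro exI[of _ "(L, J)"]) (simp only: fst_conv snd_conv)
  qed
  have "\<exists>F. \<forall>t\<in>set ts. (\<forall>i<k. fst (F t) i < m \<and> snd (F t) i < k) \<and>
     (\<forall>e. (\<forall>i<m. e i \<in> carrier (power_alg k Y)) \<longrightarrow>
        eval (power_alg k Y) e t = (\<lambda>i. if i < k then e (fst (F t) i) (snd (F t) i) else undefined))"
    using bchoice[OF ex] by simp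
  then obtain F where F0: "\<forall>t\<in>set ts. (\<forall>i<k. fst (F t) i < m \<and> snd (F t) i < k) \<and>
     (\<forall>e. (\<forall>i<m. e i \<in> carrier (power_alg k Y)) \<longrightarrow>
        eval (power_alg k Y) e t = (\<lambda>i. if i < k then e (fst (F t) i) (snd (F t) i) else undefined))" by blast
  have F: "\<And>t. t\<in>set ts \<Longrightarrow> (\<forall>i<k. fst (F t) i < m \<and> snd (F t) i < k) \<and>
     (\<forall>e. (\<forall>i<m. e i \<in> carrier (power_alg k Y)) \<longrightarrow>
        eval (power_alg k Y) e t = (\<lambda>i. if i < k then e (fst (F t) i) (snd (F t) i) else undefined))"
    by (rule bspec[OF F0])
  have len: "length ts = k" using D.prems by simp
  show ?case
  proof (rule exI[of _ "\<lambda>i. fst (F (ts ! i)) i"], rule exI[of _ "\<lambda>i. snd (F (ts ! i)) i"], rule conjI)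
    show "\<forall>i<k. fst (F (ts ! i)) i < m \<and> snd (F (ts ! i)) i < k"
    proof (intro allI impI)
      fix i assume "i < k"
      then have tsi: "ts ! i \<in> set ts" using len by simp
      show "fst (F (ts ! i)) i < m \<and> snd (F (ts ! i)) i < k" using mp[OF spec[OF conjunct1[OF F[OF tsi]], of i] \<open>i < k\<close>] .
    qed
  next
    show "\<forall>e. (\<forall>i<m. e i \<in> carrier (power_alg k Y)) \<longrightarrow> eval (power_alg k Y) e (D ts) = (\<lambda>i. if i < k then e (fst (F (ts ! i)) i) (snd (F (ts ! i)) i) else undefined)"
    proof (intro allI impI)
    fix e assume e: "\<forall>i<m. e i \<in> carrier (power_alg k Y)"
    show "eval (power_alg k Y) e (D ts) = (\<lambda>i. if i < k then e (fst (F (ts ! i)) i) (snd (F (ts ! i)) i) else undefined)"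
    proof
      fix i
      show "eval (power_alg k Y) e (D ts) i = (if i < k then e (fst (F (ts ! i)) i) (snd (F (ts ! i)) i) else undefined)"
      proof (cases "i < k")
        case True
        then have tsi: "ts ! i \<in> set ts" using len by simp
        have "eval (power_alg k Y) e (ts ! i) = (\<lambda>j. if j < k then e (fst (F (ts ! i)) j) (snd (F (ts ! i)) j) else undefined)"
          using mp[OF spec[OF conjunct2[OF F[OF tsi]], of e] e] .
        then show ?thesis using True len by (simp add: d_op_pa Let_def)
      qed (simp add: d_op_pa Let_def)
    qed
    qed
  qed
qed

lemma sa_part:
  shows "strongly_abelian k (power_alg k Y)
           (carrier (power_alg k Y) \<times> carrier (power_alg k Y))"
  unfolding strongly_abelian_def
proof (intro conjI allI impI)
  show "congruence k (power_alg k Y) (carrier (power_alg k Y) \<times> carrier (power_alg k Y))"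
  proof -
    have sc: "s_op (power_alg k Y) y \<in> carrier (power_alg k Y)" if y: "y \<in> carrier (power_alg k Y)" for y
    proof -
      have "y ((i + 1) mod k) \<in> Y" if "i < k" for i
        using y that by (simp add: power_alg_def PiE_iff)
      then show ?thesis by (simp add: power_alg_def PiE_iff extensional_def)
    qed
    have dc: "d_op (power_alg k Y) a \<in> carrier (power_alg k Y)" if a: "\<forall>i<k. a i \<in> carrier (power_alg k Y)" for a
    proof -
      have "a i i \<in> Y" if "i < k" for i
        using a that by (simp add: power_alg_def PiE_iff)
      then show ?thesis by (simp add: power_alg_def PiE_iff extensional_def)
    qed
    have eq: "equiv (carrier (power_alg k Y)) (carrier (power_alg k Y) \<times> carrier (power_alg k Y))"
      by (rule equivI) (auto simp: refl_on_def sym_def trans_def)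
    show ?thesis unfolding congruence_def using eq sc dc by blast
  qed
next
  fix m t x y z
  assume wf: "wf_trm k m t"
    and c: "\<forall>i<m. x i \<in> carrier (power_alg k Y) \<and> y i \<in> carrier (power_alg k Y) \<and> z i \<in> carrier (power_alg k Y)"
    and eq: "eval (power_alg k Y) x t = eval (power_alg k Y) y t"
  obtain L J where LJ: "\<forall>i<k. L i < m \<and> J i < k"
    "\<forall>e. (\<forall>i<m. e i \<in> carrier (power_alg k Y)) \<longrightarrow>
        eval (power_alg k Y) e t = (\<lambda>i. if i < k then e (L i) (J i) else undefined)"
    using term_shape[OF wf, of Y] by blast
  have ex: "eval (power_alg k Y) x t = (\<lambda>i. if i < k then x (L i) (J i) else undefined)"
    and ey: "eval (power_alg k Y) y t = (\<lambda>i. if i < k then y (L i) (J i) else undefined)"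
    using LJ(2) c by auto
  have e1: "eval (power_alg k Y) (\<lambda>i. if i = 0 then x 0 else z i) t =
     (\<lambda>i. if i < k then (\<lambda>i. if i = 0 then x 0 else z i) (L i) (J i) else undefined)"
    by (rule LJ(2)[rule_format]) (use c in auto)
  have e2: "eval (power_alg k Y) (\<lambda>i. if i = 0 then y 0 else z i) t =
     (\<lambda>i. if i < k then (\<lambda>i. if i = 0 then y 0 else z i) (L i) (J i) else undefined)"
    by (rule LJ(2)[rule_format]) (use c in auto)
  show "eval (power_alg k Y) (\<lambda>i. if i = 0 then x 0 else z i) t = eval (power_alg k Y) (\<lambda>i. if i = 0 then y 0 else z i) t"
    unfolding e1 e2
  proof
    fix i
    have "x (L i) (J i) = y (L i) (J i)" if "i < k" using eq that unfolding ex ey by (metis (full_types))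
    then show "(if i < k then (\<lambda>i. if i = 0 then x 0 else z i) (L i) (J i) else undefined) =
          (if i < k then (\<lambda>i. if i = 0 then y 0 else z i) (L i) (J i) else undefined)"
      by auto
  qed
qed

lemma rot:
  assumes alg: "algebra k X" and h: "h \<in> hom k X (power_alg k Y)" and x: "x \<in> carrier X"
  shows "i < k \<Longrightarrow> h ((s_op X ^^ j) x) i = h x ((i + j) mod k)"
proof (induction j arbitrary: i)
  case 0 then show ?case by simp
next
  case (Suc j)
  have xc: "(s_op X ^^ j) x \<in> carrier X"
    using alg x by (induction j) (auto simp: algebra_def)
  have "h ((s_op X ^^ Suc j) x) = s_op (power_alg k Y) (h ((s_op X ^^ j) x))"
    using h xc by (simp add: hom_def)
  then have "h ((s_op X ^^ Suc j) x) i = h ((s_op X ^^ j) x) ((i + 1) mod k)"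
    using Suc.prems by (simp add: power_alg_def)
  also have "\<dots> = h x (((i + 1) mod k + j) mod k)"
    using Suc.IH Suc.prems by simp
  also have "\<dots> = h x ((i + Suc j) mod k)"
    by (simp add: mod_add_left_eq)
  finally show ?case .
qed

lemma iter_carrier: "algebra k X \<Longrightarrow> x \<in> carrier X \<Longrightarrow> (s_op X ^^ j) x \<in> carrier X"
  by (induction j) (auto simp: algebra_def)

lemma hom_bound:
  fixes X :: "'a alg"
  assumes k: "k \<ge> 1" and Yf: "finite Y" and alg: "algebra k X" and ne: "carrier X \<noteq> {}"
    and fin: "finite (carrier X)"
  shows "real (card (hom k X (power_alg k Y))) \<le> real (card Y) powr (real (card (carrier X)) powr (1 / real k))"
proof -
  define H where "H = hom k X (power_alg k Y)"
  define \<kappa> where "\<kappa> x = restrict (\<lambda>h. h x 0) H" for x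
  define C where "C = \<kappa> ` carrier X"
  have finA: "finite (carrier (power_alg k Y))"
    using Yf by (simp add: power_alg_def finite_PiE)
  have HS: "H \<subseteq> carrier X \<rightarrow>\<^sub>E carrier (power_alg k Y)"
    unfolding H_def hom_def by auto
  have finH: "finite H" by (rule finite_subset[OF HS]) (intro finite_PiE fin finA)
  have finC: "finite C" unfolding C_def using fin by simp
  \<comment> \<open>injection of H into C \<rightarrow> Y\<close>
  have h0: "h x i = h ((s_op X ^^ i) x) 0" if "h \<in> H" "x \<in> carrier X" "i < k" for h x i
    using rot[OF alg _ that(2), of h Y 0 i] that by (simp add: H_def)
  have hY: "h x 0 \<in> Y" if "h \<in> H" "x \<in> carrier X" for h x
  proof -
    have "h x \<in> carrier (power_alg k Y)" using HS that by auto
    then show ?thesis using k by (auto simp: power_alg_def PiE_def Pi_def)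
  qed
  have inj: "inj_on (\<lambda>h. \<lambda>v\<in>C. v h) H"
  proof (rule inj_onI)
    fix h h' assume hh: "h \<in> H" "h' \<in> H" and eq: "(\<lambda>v\<in>C. v h) = (\<lambda>v\<in>C. v h')"
    have e0: "h x 0 = h' x 0" if "x \<in> carrier X" for x
    proof -
      have "\<kappa> x \<in> C" using that by (simp add: C_def)
      then have "\<kappa> x h = \<kappa> x h'" using eq by (metis restrict_apply')
      then show ?thesis using hh by (simp add: \<kappa>_def)
    qed
    show "h = h'"
    proof
      fix x
      show "h x = h' x"
      proof (cases "x \<in> carrier X")
        case True
        have "h x i = h' x i" for i
        proof (cases "i < k")
          case True
          then show ?thesis using h0 hh \<open>x \<in> carrier X\<close> e0 iter_carrier[OF alg] by metis
        next
          case False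
          have "h x \<in> carrier (power_alg k Y)" "h' x \<in> carrier (power_alg k Y)"
            using HS hh \<open>x \<in> carrier X\<close> by auto
          then show ?thesis using False by (auto simp: power_alg_def PiE_def extensional_def)
        qed
        then show ?thesis by auto
      next
        case False
        then show ?thesis using HS hh by (metis PiE_arb subsetD)
      qed
    qed
  qed
  have img: "(\<lambda>h. \<lambda>v\<in>C. v h) ` H \<subseteq> C \<rightarrow>\<^sub>E Y"
    using hY by (auto simp: C_def \<kappa>_def)
  have cardH: "card H \<le> card Y ^ card C"
  proof -
    have "card H = card ((\<lambda>h. \<lambda>v\<in>C. v h) ` H)" using inj by (simp add: card_image)
    also have "\<dots> \<le> card (C \<rightarrow>\<^sub>E Y)"
      using img by (intro card_mono) (auto simp: finite_PiE finC Yf)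
    also have "\<dots> = card Y ^ card C" by (simp add: card_PiE finC)
    finally show ?thesis .
  qed
  \<comment> \<open>surjection of carrier X onto C^k\<close>
  define g where "g x = (\<lambda>i\<in>{..<k}. \<kappa> ((s_op X ^^ i) x))" for x
  have surj: "({..<k} \<rightarrow>\<^sub>E C) \<subseteq> g ` carrier X"
  proof
    fix v assume v: "v \<in> {..<k} \<rightarrow>\<^sub>E C"
    have "\<forall>i<k. \<exists>y\<in>carrier X. v i = \<kappa> y" using v by (auto simp: C_def)
    then obtain y where y: "\<And>i. i < k \<Longrightarrow> y i \<in> carrier X \<and> v i = \<kappa> (y i)" by metis
    define a where "a i = (s_op X ^^ (k - i)) (y i)" for i
    have ac: "a i \<in> carrier X" if "i < k" for i
      using iter_carrier[OF alg] y that by (simp add: a_def)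
    define x where "x = d_op X a"
    have xc: "x \<in> carrier X" using alg ac by (simp add: algebra_def x_def)
    have "g x = v"
    proof
      fix i
      show "g x i = v i"
      proof (cases "i < k")
        case True
        have "\<kappa> ((s_op X ^^ i) x) = \<kappa> (y i)"
          unfolding \<kappa>_def
        proof (rule restrict_ext)
          fix h assume h: "h \<in> H"
          have "h ((s_op X ^^ i) x) 0 = h x i"
            using rot[OF alg _ xc, of h Y 0 i] h True by (simp add: H_def)
          also have "\<dots> = d_op (power_alg k Y) (h \<circ> a) i"
            using h ac by (simp add: H_def hom_def x_def)
          also have "\<dots> = h (a i) i" using True by (simp add: power_alg_def)
          also have "\<dots> = h (y i) ((i + (k - i)) mod k)"
            unfolding a_def using rot[OF alg _ _ True, of h Y "y i" "k - i"] h y[OF True]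
            by (simp add: H_def)
          also have "\<dots> = h (y i) 0" using True by simp
          finally show "h ((s_op X ^^ i) x) 0 = h (y i) 0" .
        qed
        then show ?thesis using True y by (simp add: g_def)
      next
        case False
        then show ?thesis using v by (auto simp: g_def PiE_def extensional_def)
      qed
    qed
    then show "v \<in> g ` carrier X" using xc by blast
  qed
  have ck: "card C ^ k \<le> card (carrier X)"
  proof -
    have "card C ^ k = card ({..<k} \<rightarrow>\<^sub>E C)" by (simp add: card_PiE finC)
    also have "\<dots> \<le> card (g ` carrier X)" using surj fin by (intro card_mono) auto
    also have "\<dots> \<le> card (carrier X)" using fin by (rule card_image_le)
    finally show ?thesis .
  qed
  have cle: "real (card C) \<le> real (card (carrier X)) powr (1 / real k)"
  proof -
    have "real (card C) = (real (card C) ^ k) powr (1 / real k)"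
    proof (cases "card C = 0")
      case True
      then show ?thesis using k by simp
    next
      case False
      then have pos: "0 < real (card C)" by simp
      have "(real (card C) ^ k) powr (1 / real k) = (real (card C) powr real k) powr (1 / real k)"
        using pos by (simp add: powr_realpow)
      also have "\<dots> = real (card C) powr (real k * (1 / real k))" by (rule powr_powr)
      also have "real k * (1 / real k) = 1" using k by simp
      finally show ?thesis using pos by simp
    qed
    also have "\<dots> \<le> real (card (carrier X)) powr (1 / real k)"
      using ck by (intro powr_mono2) (auto simp flip: of_nat_power)
    finally show ?thesis .
  qed
  show ?thesis
  proof (cases "card Y = 0")
    case True
    then have "Y = {}" using Yf by simp
    then have "carrier (power_alg k Y) = {}" using k by (simp add: power_alg_def PiE_eq_empty_iff) presburger
    then have "H = {}" using HS ne by auto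
    then show ?thesis by (simp add: H_def)
  next
    case False
    have "real (card H) \<le> real (card Y) ^ card C" using cardH by (simp flip: of_nat_power)
    also have "\<dots> = real (card Y) powr real (card C)" using False by (simp add: powr_realpow)
    also have "\<dots> \<le> real (card Y) powr (real (card (carrier X)) powr (1 / real k))"
      using False cle by (intro powr_mono) auto
    finally show ?thesis by (simp add: H_def)
  qed
qed

theorem corollary3p8:
  fixes k :: nat and Y :: "'y set"
  assumes "k \<ge> 1" and "finite Y"
  shows "strongly_abelian k (power_alg k Y)
           (carrier (power_alg k Y) \<times> carrier (power_alg k Y))
       \<and> (\<forall>n. real (c_fun k (power_alg k Y) n) \<le> real (card Y) powr (real n powr (1 / real k)))"
proof (intro conjI allI)
  show "strongly_abelian k (power_alg k Y) (carrier (power_alg k Y) \<times> carrier (power_alg k Y))"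
    by (rule sa_part)
next
  fix n
  define B where "B = real (card Y) powr (real n powr (1 / real k))"
  define SS where "SS = {card (hom k X (power_alg k Y)) | X :: nat alg.
      algebra k X \<and> carrier X \<noteq> {} \<and> finite (carrier X) \<and> card (carrier X) \<le> n}"
  have B0: "0 \<le> B" unfolding B_def by simp
  have bnd: "real m \<le> B" if mS: "m \<in> SS" for m
  proof -
    obtain X :: "nat alg" where X: "m = card (hom k X (power_alg k Y))" "algebra k X"
      "carrier X \<noteq> {}" "finite (carrier X)" "card (carrier X) \<le> n"
      using mS unfolding SS_def by blast
    have "real m \<le> real (card Y) powr (real (card (carrier X)) powr (1 / real k))"
      unfolding X(1) by (rule hom_bound[OF assms X(2-4)])
    also have "\<dots> \<le> B"
    proof (cases "card Y = 0")
      case True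
      then show ?thesis by (simp add: B_def)
    next
      case False
      have "real (card (carrier X)) powr (1 / real k) \<le> real n powr (1 / real k)"
        using X(5) by (intro powr_mono2) auto
      then show ?thesis unfolding B_def using False by (intro powr_mono) auto
    qed
    finally show ?thesis .
  qed
  have "c_fun k (power_alg k Y) n = Sup SS" unfolding c_fun_def SS_def by simp
  moreover have "real (Sup SS) \<le> B"
  proof (cases "SS = {}")
    case True
    then show ?thesis using B0 by (simp add: Sup_nat_def)
  next
    case False
    have "Sup SS \<le> nat \<lfloor>B\<rfloor>"
    proof (rule cSup_least[OF False])
      fix m assume "m \<in> SS"
      then have "real m \<le> B" by (rule bnd)
      then show "m \<le> nat \<lfloor>B\<rfloor>" by (simp add: le_nat_floor)
    qed
    then have "real (Sup SS) \<le> real (nat \<lfloor>B\<rfloor>)" by simp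
    also have "\<dots> \<le> B" using B0 by simp
    finally show ?thesis .
  qed
  ultimately show "real (c_fun k (power_alg k Y) n) \<le> real (card Y) powr (real n powr (1 / real k))"
    by (simp add: B_def)
qed

end
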